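(* Let $(L,\le,(\sqsubseteq_\alpha)_{\alpha<\kappa})$ be a model of Axioms 1–4. Then $(L,\sqsubseteq)$ is a complete lattice. More precisely, $\perp\sqsubseteq x$ for every $x\in L$, and every nonempty subset of $L$ has a least upper bound with respect to $\sqsubseteq$.
   Context: Setting (model of Axioms 1–4). Let $(L,\le)$ be a complete lattice with join operation $\bigvee$ and least element $\perp$. Let $\kappa>0$ be an ordinal, and for each ordinal $\alpha<\kappa$ let $\sqsubseteq_\alpha$ be a preorder (reflexive and transitive relation) on $L$. Derived relations: - $x=_\alpha y$ means $x\sqsubseteq_\alpha y$ and $y\sqsubseteq_\alpha x$. - $x\sqsubset_\alpha y$ means $x\sqsubseteq_\alpha y$ and not $x=_\alpha y$. - $\sqsubset=\bigcup_{\alpha<\kappa}\sqsubset_\alpha$. - $x\sqsubseteq y$ means $x\sqsubset y$ or $x=y$. Derived sets, for $x\in L$ and $\alpha<\kappa$: - $(x]_\alpha=\{y\in L:\forall\beta<\alpha,\ x=_\beta y\}$. - $[x]_\alpha=\{y\in L: x=_\alpha y\}$. For a set $X$, $X\sqsubseteq_\alpha y$ means $x\sqsubseteq_\alpha y$ for all $x\in X$. The structure is a model of Axioms 1–4 if: - (A1) for all $\alpha<\beta<\kappa$, $x\sqsubseteq_\beta y$ implies $x=_\alpha y$; - (A2) $\bigcap_{\alpha<\kappa}=_\alpha$ is the identity relation on $L$; - (A3) for every $x\in L$, every $\alpha<\kappa$ and every $X\subseteq(x]_\alpha$ there is $y\in(x]_\alpha$ with $X\sqsubseteq_\alpha y$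 such that for all $z\in(x]_\alpha$ with $X\sqsubseteq_\alpha z$ we have $y\sqsubseteq_\alpha z$ and $y\le z$; - (A4) for every nonempty $X\subseteq L$, every $\alpha<\kappa$ and every $y\in L$, if $y=_\alpha x$ for all $x\in X$ then $y=_\alpha\bigvee X$. *)

theory Defs
  imports Main
begin

text \<open>The lattice L is the whole type 'a (a complete lattice with order le, join Sup, least
element bot). The ordinal kappa is represented by a nonempty set K of a well-ordered type 'k
(any well-ordered set is order-isomorphic to an ordinal and conversely); "alpha < kappa" becomes
"alpha in K". The family of preorders is R :: 'k => 'a => 'a => bool, R a x y meaning
x is below y in the alpha-th preorder.\<close>

definition eqa :: "('k \<Rightarrow> 'a \<Rightarrow> 'a \<Rightarrow> bool) \<Rightarrow> 'k \<Rightarrow> 'a \<Rightarrow> 'a \<Rightarrow> bool" where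
  "eqa R a x y \<longleftrightarrow> R a x y \<and> R a y x"

definition lta :: "('k \<Rightarrow> 'a \<Rightarrow> 'a \<Rightarrow> bool) \<Rightarrow> 'k \<Rightarrow> 'a \<Rightarrow> 'a \<Rightarrow> bool" where
  "lta R a x y \<longleftrightarrow> R a x y \<and> \<not> eqa R a x y"

definition sqlt :: "'k set \<Rightarrow> ('k \<Rightarrow> 'a \<Rightarrow> 'a \<Rightarrow> bool) \<Rightarrow> 'a \<Rightarrow> 'a \<Rightarrow> bool" where
  "sqlt K R x y \<longleftrightarrow> (\<exists>a\<in>K. lta R a x y)"

definition sqle :: "'k set \<Rightarrow> ('k \<Rightarrow> 'a \<Rightarrow> 'a \<Rightarrow> bool) \<Rightarrow> 'a \<Rightarrow> 'a \<Rightarrow> bool" where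
  "sqle K R x y \<longleftrightarrow> sqlt K R x y \<or> x = y"

definition downcls :: "'k::order set \<Rightarrow> ('k \<Rightarrow> 'a \<Rightarrow> 'a \<Rightarrow> bool) \<Rightarrow> 'k \<Rightarrow> 'a \<Rightarrow> 'a set" where
  "downcls K R a x = {y. \<forall>b\<in>K. b < a \<longrightarrow> eqa R b x y}"

definition eqcls :: "('k \<Rightarrow> 'a \<Rightarrow> 'a \<Rightarrow> bool) \<Rightarrow> 'k \<Rightarrow> 'a \<Rightarrow> 'a set" where
  "eqcls R a x = {y. eqa R a x y}"

definition model_axioms :: "'k::wellorder set \<Rightarrow> ('k \<Rightarrow> 'a::complete_lattice \<Rightarrow> 'a \<Rightarrow> bool) \<Rightarrow> bool" where
  "model_axioms K R \<longleftrightarrow>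
     K \<noteq> {} \<and>
     (\<forall>a\<in>K. (\<forall>x. R a x x) \<and> (\<forall>x y z. R a x y \<longrightarrow> R a y z \<longrightarrow> R a x z)) \<and>
     \<comment> \<open>A1\<close>
     (\<forall>a\<in>K. \<forall>b\<in>K. a < b \<longrightarrow> (\<forall>x y. R b x y \<longrightarrow> eqa R a x y)) \<and>
     \<comment> \<open>A2\<close>
     (\<forall>x y. (\<forall>a\<in>K. eqa R a x y) \<longrightarrow> x = y) \<and>
     \<comment> \<open>A3\<close>
     (\<forall>x. \<forall>a\<in>K. \<forall>X. X \<subseteq> downcls K R a x \<longrightarrow>
        (\<exists>y\<in>downcls K R a x. (\<forall>u\<in>X. R a u y) \<and>
           (\<forall>z\<in>downcls K R a x. (\<forall>u\<in>X. R a u z) \<longrightarrow> R a y z \<and> y \<le> z))) \<and>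
     \<comment> \<open>A4\<close>
     (\<forall>X. \<forall>a\<in>K. \<forall>y. X \<noteq> {} \<longrightarrow> (\<forall>x\<in>X. eqa R a y x) \<longrightarrow> eqa R a y (Sup X))"

end

theory Submission
  imports Defs
begin

locale mdl =
  fixes K :: "'k::wellorder set" and R :: "'k \<Rightarrow> 'a::complete_lattice \<Rightarrow> 'a \<Rightarrow> bool"
  assumes M: "model_axioms K R"
begin

abbreviation E where "E a x y \<equiv> eqa R a x y"

lemma Mp1: "(\<forall>a\<in>K. (\<forall>x. R a x x) \<and> (\<forall>x y z. R a x y \<longrightarrow> R a y z \<longrightarrow> R a x z))"
  using M unfolding model_axioms_def by (elim conjE) assumption

lemma Mp2: "(\<forall>a\<in>K. \<forall>b\<in>K. a < b \<longrightarrow> (\<forall>x y. R b x y \<longrightarrow> eqa R a x y))"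
  using M unfolding model_axioms_def by (elim conjE) assumption

lemma Mp3: "(\<forall>x y. (\<forall>a\<in>K. eqa R a x y) \<longrightarrow> x = y)"
  using M unfolding model_axioms_def by (elim conjE) assumption

lemma Mp4: "(\<forall>x. \<forall>a\<in>K. \<forall>X. X \<subseteq> downcls K R a x \<longrightarrow>
        (\<exists>y\<in>downcls K R a x. (\<forall>u\<in>X. R a u y) \<and>
           (\<forall>z\<in>downcls K R a x. (\<forall>u\<in>X. R a u z) \<longrightarrow> R a y z \<and> y \<le> z)))"
  using M unfolding model_axioms_def by (elim conjE) assumption

lemma Mp5: "(\<forall>X. \<forall>a\<in>K. \<forall>y. X \<noteq> {} \<longrightarrow> (\<forall>x\<in>X. eqa R a y x) \<longrightarrow> eqa R a y (Sup X))"
  using M unfolding model_axioms_def by (elim conjE) assumption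

lemma Rrefl: "a\<in>K \<Longrightarrow> R a x x" using Mp1 by blast
lemma Rtrans: "a\<in>K \<Longrightarrow> R a x y \<Longrightarrow> R a y z \<Longrightarrow> R a x z" using Mp1 by blast
lemma AX1: "a\<in>K \<Longrightarrow> b\<in>K \<Longrightarrow> a<b \<Longrightarrow> R b x y \<Longrightarrow> E a x y" using Mp2 by blast
lemma AX2: "(\<forall>a\<in>K. E a x y) \<Longrightarrow> x = y" using Mp3 by blast
lemma AX3: "a\<in>K \<Longrightarrow> X \<subseteq> downcls K R a x \<Longrightarrow> \<exists>y\<in>downcls K R a x. (\<forall>u\<in>X. R a u y) \<and>
           (\<forall>z\<in>downcls K R a x. (\<forall>u\<in>X. R a u z) \<longrightarrow> R a y z \<and> y \<le> z)"
  using Mp4 by blast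
lemma AX4: "a\<in>K \<Longrightarrow> X\<noteq>{} \<Longrightarrow> \<forall>x\<in>X. E a y x \<Longrightarrow> E a y (Sup X)"
  using Mp5 by blast

lemma Erefl: "a\<in>K \<Longrightarrow> E a x x" by (simp add: eqa_def Rrefl)
lemma Esym: "E a x y \<Longrightarrow> E a y x" by (simp add: eqa_def)
lemma Etrans: "a\<in>K \<Longrightarrow> E a x y \<Longrightarrow> E a y z \<Longrightarrow> E a x z" unfolding eqa_def using Rtrans by blast
lemma ER1: "E a x y \<Longrightarrow> R a x y" by (simp add: eqa_def)
lemma ER2: "E a x y \<Longrightarrow> R a y x" by (simp add: eqa_def)

definition AB where "AB a x y \<longleftrightarrow> (\<forall>b\<in>K. b<a \<longrightarrow> E b x y)"

lemma dc: "y \<in> downcls K R a x \<longleftrightarrow> AB a x y" by (simp add: downcls_def AB_def)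
lemma ABsym: "AB a x y \<Longrightarrow> AB a y x" by (simp add: AB_def Esym)
lemma ABtrans: "AB a x y \<Longrightarrow> AB a y z \<Longrightarrow> AB a x z" unfolding AB_def using Etrans by blast
lemma ABrefl: "AB a x x" by (simp add: AB_def Erefl)
lemma ABmono: "AB a x y \<Longrightarrow> b \<le> a \<Longrightarrow> AB b x y" unfolding AB_def by auto
lemma ABE: "AB a x y \<Longrightarrow> b\<in>K \<Longrightarrow> b < a \<Longrightarrow> E b x y" unfolding AB_def by auto

definition D where "D x y = (LEAST a. a\<in>K \<and> \<not> E a x y)"

lemma Dex: "x \<noteq> y \<Longrightarrow> \<exists>a. a\<in>K \<and> \<not> E a x y" using AX2 by blast

lemma DK: "x \<noteq> y \<Longrightarrow> D x y \<in> K \<and> \<not> E (D x y) x y"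
  unfolding D_def using Dex[of x y] by (metis (mono_tags, lifting) LeastI)

lemma DAB: "x \<noteq> y \<Longrightarrow> AB (D x y) x y"
  unfolding AB_def D_def using not_less_Least by blast

lemma Dle: "a\<in>K \<Longrightarrow> \<not> E a x y \<Longrightarrow> D x y \<le> a"
  unfolding D_def by (simp add: Least_le)

lemma Dsym: "D x y = D y x"
  unfolding D_def by (metis Esym)

lemma F3: "sqle K R x z \<Longrightarrow> a\<in>K \<Longrightarrow> AB a x z \<Longrightarrow> R a x z"
proof -
  assume s: "sqle K R x z" and a: "a\<in>K" and ab: "AB a x z"
  show "R a x z"
  proof (cases "x = z")
    case True thus ?thesis using a Rrefl by simp
  next
    case False
    then obtain b where b: "b\<in>K" "R b x z" "\<not> E b x z" using s unfolding sqle_def sqlt_def lta_def by blast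
    have "\<not> b < a" using ab b unfolding AB_def by blast
    then consider "b = a" | "a < b" by fastforce
    thus ?thesis
    proof cases
      case 1 thus ?thesis using b by simp
    next
      case 2 thus ?thesis using AX1[OF a b(1) 2 b(2)] ER1 by blast
    qed
  qed
qed

lemma lta_trans: "lta R a x y \<Longrightarrow> lta R b y z \<Longrightarrow> a\<in>K \<Longrightarrow> b\<in>K \<Longrightarrow> sqlt K R x z"
proof -
  assume 1: "lta R a x y" and 2: "lta R b y z" and a: "a\<in>K" and b: "b\<in>K"
  have r1: "R a x y" "\<not> E a x y" using 1 unfolding lta_def by auto
  have r2: "R b y z" "\<not> E b y z" using 2 unfolding lta_def by auto
  consider "a < b" | "b < a" | "a = b" using not_less_iff_gr_or_eq by blast
  thus ?thesis
  proof cases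
    case c: 1
    have e: "E a y z" using AX1[OF a b c r2(1)] .
    have "R a x z" using Rtrans[OF a r1(1) ER1[OF e]] .
    moreover have "\<not> E a x z"
    proof
      assume "E a x z" thus False using Etrans[OF a _ Esym[OF e]] r1(2) by blast
    qed
    ultimately show ?thesis using a unfolding sqlt_def lta_def by blast
  next
    case c: 2
    have e: "E b x y" using AX1[OF b a c r1(1)] .
    have "R b x z" using Rtrans[OF b ER1[OF e] r2(1)] .
    moreover have "\<not> E b x z"
    proof
      assume "E b x z" thus False using Etrans[OF b Esym[OF e]] r2(2) by blast
    qed
    ultimately show ?thesis using b unfolding sqlt_def lta_def by blast
  next
    case c: 3
    have "R a x z" using Rtrans[OF a r1(1)] r2(1) c by simp
    moreover have "\<not> E a x z"
    proof
      assume "E a x z"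
      hence "R a z x" by (rule ER2)
      hence "R a y x" using Rtrans[OF a] r2(1) c by blast
      thus False using r1 unfolding eqa_def by blast
    qed
    ultimately show ?thesis using a unfolding sqlt_def lta_def by blast
  qed
qed

lemma po_antisym: "sqle K R x y \<Longrightarrow> sqle K R y x \<Longrightarrow> x = y"
proof (rule ccontr)
  assume 1: "sqle K R x y" "sqle K R y x" "x \<noteq> y"
  then obtain a b where ab: "a\<in>K" "b\<in>K" "lta R a x y" "lta R b y x"
    unfolding sqle_def sqlt_def by auto
  have r1: "R a x y" "\<not> E a x y" using ab(3) unfolding lta_def by auto
  have r2: "R b y x" "\<not> E b y x" using ab(4) unfolding lta_def by auto
  consider "a < b" | "b < a" | "a = b" using not_less_iff_gr_or_eq by blast
  thus False
  proof cases
    case 1 thus False using AX1[OF ab(1,2) 1 r2(1)] r1(2) Esym by blast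
  next
    case 2 thus False using AX1[OF ab(2,1) 2 r1(1)] r2(2) Esym by blast
  next
    case 3 thus False using r1 r2 unfolding eqa_def by blast
  qed
qed

lemma po_trans: "sqle K R x y \<Longrightarrow> sqle K R y z \<Longrightarrow> sqle K R x z"
  unfolding sqle_def using lta_trans unfolding sqlt_def by blast

lemma bot_least: "sqle K R bot x"
proof (cases "x = bot")
  case True thus ?thesis by (simp add: sqle_def)
next
  case False
  hence ne: "bot \<noteq> x" by simp
  define c where "c = D bot x"
  have c: "c\<in>K" "\<not> E c bot x" "AB c bot x" using DK[OF ne] DAB[OF ne] c_def by auto
  obtain m where m: "m \<in> downcls K R c x" "\<forall>w\<in>downcls K R c x. R c m w \<and> m \<le> w"
    using AX3[OF c(1), of "{}" x] by auto
  have "bot \<in> downcls K R c x" using c(3) ABsym dc by blast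
  hence "m = bot" using m(2) bot_unique by blast
  moreover have "x \<in> downcls K R c x" using dc ABrefl by blast
  ultimately have "R c bot x" using m(2) by blast
  thus ?thesis using c unfolding sqle_def sqlt_def lta_def by blast
qed


definition T :: "'a set \<Rightarrow> 'k \<Rightarrow> 'a set" where
  "T X a = {x\<in>X. \<forall>x'\<in>X. \<forall>b\<in>K. b<a \<longrightarrow> AB b x' x \<longrightarrow> R b x' x}"
definition T' :: "'a set \<Rightarrow> 'k \<Rightarrow> 'a set" where
  "T' X a = {x\<in>X. \<forall>x'\<in>X. \<forall>b\<in>K. b\<le>a \<longrightarrow> AB b x' x \<longrightarrow> R b x' x}"

lemma T'T: "T' X a \<subseteq> T X a" unfolding T_def T'_def by auto

lemma T'mono: "b \<le> a \<Longrightarrow> T' X a \<subseteq> T' X b"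
  unfolding T'_def by (auto intro: order.trans)

lemma TX: "x \<in> T X a \<Longrightarrow> x \<in> X" unfolding T_def by auto

lemma T_iff: "x \<in> T X a \<longleftrightarrow> x\<in>X \<and> (\<forall>b\<in>K. b<a \<longrightarrow> x\<in>T' X b)"
proof
  assume "x \<in> T X a" thus "x\<in>X \<and> (\<forall>b\<in>K. b<a \<longrightarrow> x\<in>T' X b)"
    unfolding T_def T'_def using le_less_trans by blast
next
  assume "x\<in>X \<and> (\<forall>b\<in>K. b<a \<longrightarrow> x\<in>T' X b)" thus "x \<in> T X a"
    unfolding T_def T'_def by blast
qed

lemma T_agree: "x\<in>T X a \<Longrightarrow> y\<in>T X a \<Longrightarrow> AB a x y"
proof (rule ccontr)
  assume x: "x\<in>T X a" and y: "y\<in>T X a" and n: "\<not> AB a x y"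
  then obtain b where b: "b\<in>K" "b<a" "\<not> E b x y" unfolding AB_def by auto
  hence ne: "x\<noteq>y" using Erefl by auto
  define d where "d = D x y"
  have d: "d\<in>K" "\<not> E d x y" "AB d x y" using DK[OF ne] DAB[OF ne] d_def by auto
  have "d \<le> b" using Dle[OF b(1,3)] d_def by simp
  hence da: "d < a" using b(2) by simp
  have "R d y x" using x TX[OF y] d(1) da ABsym[OF d(3)] unfolding T_def by blast
  moreover have "R d x y" using y TX[OF x] d(1) da d(3) unfolding T_def by blast
  ultimately show False using d(2) unfolding eqa_def by blast
qed

lemma T_closed: "x\<in>T X a \<Longrightarrow> x'\<in>X \<Longrightarrow> AB a x' x \<Longrightarrow> x'\<in>T X a"
proof -
  assume x: "x\<in>T X a" and x': "x'\<in>X" and ab: "AB a x' x"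
  have "R c x'' x'" if "x''\<in>X" "c\<in>K" "c<a" "AB c x'' x'" for x'' c
  proof -
    have "AB c x' x" using ABmono[OF ab] that(3) by simp
    hence "AB c x'' x" using ABtrans that(4) by blast
    hence "R c x'' x" using x that(1,2,3) unfolding T_def by blast
    moreover have "E c x x'" using ABE[OF ABsym[OF ab] that(2,3)] .
    ultimately show ?thesis using Rtrans[OF that(2)] ER1 by blast
  qed
  thus ?thesis using x' unfolding T_def by blast
qed

lemma T'_char: "a\<in>K \<Longrightarrow> x\<in>T X a \<Longrightarrow> \<forall>x'\<in>T X a. R a x' x \<Longrightarrow> x\<in>T' X a"
proof -
  assume a: "a\<in>K" and x: "x\<in>T X a" and h: "\<forall>x'\<in>T X a. R a x' x"
  have "R b x' x" if "x'\<in>X" "b\<in>K" "b\<le>a" "AB b x' x" for x' b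
  proof (cases "b < a")
    case True thus ?thesis using x that unfolding T_def by blast
  next
    case False
    hence "b = a" using that(3) by simp
    thus ?thesis using T_closed[OF x that(1)] that(4) h by blast
  qed
  thus ?thesis using TX[OF x] unfolding T'_def by blast
qed

lemma T'_ub: "a\<in>K \<Longrightarrow> x\<in>T' X a \<Longrightarrow> x'\<in>T X a \<Longrightarrow> R a x' x"
proof -
  assume a: "a\<in>K" and x: "x\<in>T' X a" and x': "x'\<in>T X a"
  have "AB a x' x" using T_agree[OF x'] T'T x by blast
  thus ?thesis using x a TX[OF x'] unfolding T'_def by blast
qed

lemma T'_agree: "a\<in>K \<Longrightarrow> x\<in>T' X a \<Longrightarrow> y\<in>T' X a \<Longrightarrow> E a x y"
  unfolding eqa_def using T'_ub T'T by blast

lemma branch: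
  assumes J: "J \<subseteq> K" and ne: "\<forall>b\<in>J. T' X b \<noteq> {}"
  shows "\<exists>v. \<forall>b\<in>J. \<forall>t\<in>T' X b. E b v t"
proof -
  define tt where "tt b = (SOME t. t \<in> T' X b)" for b
  have tt: "tt b \<in> T' X b" if "b\<in>J" for b
    unfolding tt_def using ne that by (simp add: some_in_eq)
  have sub: "T X b \<subseteq> downcls K R b (tt b)" if "b\<in>J" for b
    using T_agree T'T tt[OF that] dc by blast
  define P where "P b y \<longleftrightarrow> y\<in>downcls K R b (tt b) \<and> (\<forall>u\<in>T X b. R b u y) \<and>
      (\<forall>z\<in>downcls K R b (tt b). (\<forall>u\<in>T X b. R b u z) \<longrightarrow> R b y z \<and> y \<le> z)" for b y
  define s where "s b = (SOME y. P b y)" for b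
  have s: "P b (s b)" if "b\<in>J" for b
  proof -
    have "\<exists>y. P b y" using AX3[OF _ sub[OF that]] J that unfolding P_def by blast
    thus ?thesis unfolding s_def by (rule someI_ex)
  qed
  have sAB: "AB b (tt b) (s b)" if "b\<in>J" for b using s[OF that] dc unfolding P_def by blast
  have s1: "E b (s b) t" if "b\<in>J" "t\<in>T' X b" for b t
  proof -
    have bK: "b\<in>K" using J that by blast
    have "R b t (s b)" using s[OF that(1)] T'T that(2) unfolding P_def by blast
    moreover have "R b (s b) t"
    proof -
      have "AB b (tt b) t" using T_agree T'T tt[OF that(1)] that(2) by blast
      hence "t \<in> downcls K R b (tt b)" using dc by blast
      moreover have "\<forall>u\<in>T X b. R b u t" using T'_ub[OF bK that(2)] by blast
      ultimately show ?thesis using s[OF that(1)] unfolding P_def by blast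
    qed
    ultimately show ?thesis unfolding eqa_def by blast
  qed
  have s2: "s b \<le> s c" if "b\<in>J" "c\<in>J" "b<c" for b c
  proof -
    have bK: "b\<in>K" using J that by blast
    have tc: "tt c \<in> T' X b" using T'mono[OF less_imp_le[OF that(3)], of X] tt[OF that(2)] by blast
    have "AB b (tt b) (tt c)" using T_agree T'T tt[OF that(1)] tc by blast
    moreover have "AB b (tt c) (s c)" using ABmono[OF sAB[OF that(2)]] that(3) by simp
    ultimately have "s c \<in> downcls K R b (tt b)" using ABtrans dc by blast
    moreover have "\<forall>u\<in>T X b. R b u (s c)"
    proof
      fix u assume u: "u \<in> T X b"
      have "R b u (tt c)" using T'_ub[OF bK tc u] .
      moreover have "E b (tt c) (s c)" using ABE[OF sAB[OF that(2)] bK that(3)] .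
      ultimately show "R b u (s c)" using Rtrans[OF bK] ER1 by blast
    qed
    ultimately show ?thesis using s[OF that(1)] unfolding P_def by blast
  qed
  define v where "v = Sup (s ` J)"
  have "E b0 v t" if b0: "b0\<in>J" and t: "t\<in>T' X b0" for b0 t
  proof -
    have b0K: "b0\<in>K" using J b0 by blast
    define S' where "S' = s ` {b\<in>J. b0 \<le> b}"
    have "S' \<noteq> {}" using b0 unfolding S'_def by blast
    moreover have "\<forall>x\<in>S'. E b0 (s b0) x"
    proof
      fix x assume "x\<in>S'"
      then obtain b where b: "b\<in>J" "b0 \<le> b" "x = s b" unfolding S'_def by blast
      show "E b0 (s b0) x"
      proof (cases "b = b0")
        case True thus ?thesis using b Erefl[OF b0K] by simp
      next
        case False
        hence lt: "b0 < b" using b(2) by simp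
        have "tt b \<in> T' X b0" using T'mono[OF b(2), of X] tt[OF b(1)] by blast
        hence "E b0 (s b0) (tt b)" using s1[OF b0] by blast
        moreover have "E b0 (tt b) (s b)" using ABE[OF sAB[OF b(1)] b0K lt] .
        ultimately show ?thesis using Etrans[OF b0K] b(3) by blast
      qed
    qed
    ultimately have e: "E b0 (s b0) (Sup S')" using AX4[OF b0K] by blast
    have "Sup S' = v"
    proof (rule order.antisym)
      show "Sup S' \<le> v" unfolding v_def S'_def by (rule Sup_subset_mono) blast
    next
      show "v \<le> Sup S'" unfolding v_def
      proof (rule Sup_least)
        fix y assume "y \<in> s ` J"
        then obtain b where b: "b\<in>J" "y = s b" by blast
        show "y \<le> Sup S'"
        proof (cases "b0 \<le> b")
          case True
          hence "y \<in> S'" using b unfolding S'_def by blast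
          thus ?thesis by (rule Sup_upper)
        next
          case False
          hence "b < b0" by simp
          hence "y \<le> s b0" using s2[OF b(1) b0] b(2) by simp
          moreover have "s b0 \<in> S'" using b0 unfolding S'_def by blast
          ultimately show ?thesis using Sup_upper order.trans by blast
        qed
      qed
    qed
    thus ?thesis using e Etrans[OF b0K Esym s1[OF b0 t]] by simp
  qed
  thus ?thesis by blast
qed

lemma UBl:
  assumes c: "c\<in>K" and x: "x\<in>X" and nx: "x \<notin> T' X c" and below: "\<forall>b\<in>K. b<c \<longrightarrow> x\<in>T' X b"
    and ne: "T' X c \<noteq> {}" and yb: "\<forall>t\<in>T' X c. E c y t"
  shows "lta R c x y"
proof -
  have xT: "x \<in> T X c" using T_iff x below by blast
  obtain t where t: "t \<in> T' X c" using ne by blast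
  have r: "R c x t" using T'_ub[OF c t xT] .
  have ne2: "\<not> E c x t"
  proof
    assume e: "E c x t"
    have "\<forall>x'\<in>T X c. R c x' x" using T'_ub[OF c t] Rtrans[OF c] ER2[OF e] by blast
    thus False using T'_char[OF c xT] nx by blast
  qed
  have ety: "E c t y" using yb t Esym by blast
  have "R c x y" using Rtrans[OF c r ER1[OF ety]] .
  moreover have "\<not> E c x y" using Etrans[OF c _ Esym[OF ety]] ne2 by blast
  ultimately show ?thesis unfolding lta_def by blast
qed

lemma LEASTl:
  assumes ne: "y\<noteq>z" and cd: "c = D y z" and nc: "T' X c \<noteq> {}"
    and yb: "\<forall>b\<in>K. b \<le> c \<longrightarrow> (\<forall>t\<in>T' X b. E b y t)" and z: "\<forall>x\<in>X. sqle K R x z"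
  shows "sqlt K R y z"
proof -
  have c: "c\<in>K" "\<not> E c y z" "AB c y z" using DK[OF ne] DAB[OF ne] cd by auto
  obtain t where t: "t \<in> T' X c" using nc by blast
  have "AB c t y" unfolding AB_def
  proof (intro ballI impI)
    fix b assume b: "b\<in>K" "b<c"
    have "t \<in> T' X b" using T'mono[OF less_imp_le[OF b(2)], of X] t by blast
    thus "E b t y" using yb b Esym by auto
  qed
  hence "AB c t z" using ABtrans c(3) by blast
  moreover have "sqle K R t z" using z t TX T'T by blast
  ultimately have "R c t z" using F3 c(1) by blast
  moreover have "E c y t" using yb c(1) t by blast
  ultimately have "R c y z" using Rtrans[OF c(1)] ER1 by blast
  thus ?thesis using c unfolding sqlt_def lta_def by blast
qed


lemma lub:
  assumes Xne: "X \<noteq> {}"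
  shows "\<exists>y. (\<forall>x\<in>X. sqle K R x y) \<and> (\<forall>z. (\<forall>x\<in>X. sqle K R x z) \<longrightarrow> sqle K R y z)"
proof (cases "\<exists>a\<in>K. T' X a = {}")
  case False
  hence ne: "\<forall>b\<in>K. T' X b \<noteq> {}" by blast
  obtain v where v: "\<forall>b\<in>K. \<forall>t\<in>T' X b. E b v t" using branch[OF order.refl ne] by blast
  show ?thesis
  proof (intro exI[of _ v] conjI allI ballI impI)
    fix x assume x: "x\<in>X"
    show "sqle K R x v"
    proof (cases "\<forall>a\<in>K. x\<in>T' X a")
      case True
      hence "\<forall>a\<in>K. E a x v" using v Esym by blast
      hence "x = v" by (rule AX2)
      thus ?thesis unfolding sqle_def by blast
    next
      case False
      define c where "c = (LEAST c. c\<in>K \<and> x\<notin>T' X c)"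
      have c: "c\<in>K \<and> x\<notin>T' X c" unfolding c_def by (rule LeastI_ex) (use False in blast)
      have below: "\<forall>b\<in>K. b<c \<longrightarrow> x\<in>T' X b" using not_less_Least c_def by blast
      have "lta R c x v" using UBl[of c x X v] c x below ne v by blast
      thus ?thesis using c unfolding sqle_def sqlt_def by blast
    qed
  next
    fix z assume z: "\<forall>x\<in>X. sqle K R x z"
    show "sqle K R v z"
    proof (cases "v = z")
      case True thus ?thesis unfolding sqle_def by blast
    next
      case False
      have "sqlt K R v z"
        using LEASTl[OF False refl, of X] ne DK[OF False] v z by blast
      thus ?thesis unfolding sqle_def by blast
    qed
  qed
next
  case True
  define l where "l = (LEAST a. a\<in>K \<and> T' X a = {})"
  have l: "l\<in>K" "T' X l = {}" using LeastI_ex[of "\<lambda>a. a\<in>K \<and> T' X a = {}"] True l_def by auto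
  have nel: "\<forall>b\<in>K. b<l \<longrightarrow> T' X b \<noteq> {}" using not_less_Least l_def by blast
  obtain v where v: "\<forall>b\<in>{b\<in>K. b<l}. \<forall>t\<in>T' X b. E b v t"
    using branch[of "{b\<in>K. b<l}" X] nel by blast
  have Tsub: "T X l \<subseteq> downcls K R l v"
  proof
    fix u assume u: "u \<in> T X l"
    have "AB l v u" unfolding AB_def using T_iff u v by blast
    thus "u \<in> downcls K R l v" using dc by blast
  qed
  obtain y where y: "y\<in>downcls K R l v" "\<forall>u\<in>T X l. R l u y"
    "\<forall>z\<in>downcls K R l v. (\<forall>u\<in>T X l. R l u z) \<longrightarrow> R l y z \<and> y \<le> z"
    using AX3[OF l(1) Tsub] by blast
  have yv: "AB l v y" using y(1) dc by blast
  have ybr: "\<forall>b\<in>K. b \<le> l \<longrightarrow> (\<forall>t\<in>T' X b. E b y t)"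
  proof (intro ballI impI)
    fix b t assume b: "b\<in>K" "b \<le> l" and t: "t\<in>T' X b"
    have "b \<noteq> l" using t l(2) by blast
    hence bl: "b < l" using b(2) by simp
    have "E b y v" using Esym[OF ABE[OF yv b(1) bl]] .
    moreover have "E b v t" using v b(1) bl t by blast
    ultimately show "E b y t" using Etrans[OF b(1)] by blast
  qed
  show ?thesis
  proof (intro exI[of _ y] conjI allI ballI impI)
    fix x assume x: "x\<in>X"
    show "sqle K R x y"
    proof (cases "x \<in> T X l")
      case True
      have r: "R l x y" using y(2) True by blast
      have "\<not> E l x y"
      proof
        assume e: "E l x y"
        have "\<forall>x'\<in>T X l. R l x' x" using y(2) Rtrans[OF l(1)] ER2[OF e] by blast
        thus False using T'_char[OF l(1) True] l(2) by blast
      qed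
      thus ?thesis using r l(1) unfolding sqle_def sqlt_def lta_def by blast
    next
      case False
      then obtain b where b: "b\<in>K" "b<l" "x\<notin>T' X b" using T_iff x by blast
      define c where "c = (LEAST c. c\<in>K \<and> x\<notin>T' X c)"
      have c: "c\<in>K \<and> x\<notin>T' X c" unfolding c_def by (rule LeastI_ex) (use b in blast)
      have "c \<le> b" unfolding c_def using b by (simp add: Least_le)
      hence cl: "c < l" using b(2) by simp
      have below: "\<forall>b\<in>K. b<c \<longrightarrow> x\<in>T' X b" using not_less_Least c_def by blast
      have "lta R c x y" using UBl[of c x X y] c x below nel cl ybr by auto
      thus ?thesis using c unfolding sqle_def sqlt_def by blast
    qed
  next
    fix z assume z: "\<forall>x\<in>X. sqle K R x z"
    show "sqle K R y z"
    proof (cases "y = z")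
      case True thus ?thesis unfolding sqle_def by blast
    next
      case False
      define c where "c = D y z"
      have c: "c\<in>K" "\<not> E c y z" "AB c y z" using DK[OF False] DAB[OF False] c_def by auto
      consider "c < l" | "l \<le> c" by fastforce
      thus ?thesis
      proof cases
        case 1
        have "sqlt K R y z" using LEASTl[OF False c_def, of X] nel c(1) 1 ybr z by auto
        thus ?thesis unfolding sqle_def by blast
      next
        case 2
        have ylz: "AB l y z" using ABmono[OF c(3) 2] .
        have zdc: "z \<in> downcls K R l v" using dc ABtrans yv ylz by blast
        have zub: "\<forall>u\<in>T X l. R l u z"
        proof
          fix u assume u: "u \<in> T X l"
          have "sqle K R u z" using z TX[OF u] by blast
          moreover have "AB l u z" using ABtrans[OF ABsym[OF Tsub[THEN subsetD, OF u, unfolded dc]]]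
            ABtrans[OF yv ylz] by blast
          ultimately show "R l u z" using F3 l(1) by blast
        qed
        have Ryz: "R l y z" "y \<le> z" using y(3) zdc zub by auto
        show ?thesis
        proof (cases "c = l")
          case True
          thus ?thesis using Ryz(1) c unfolding sqle_def sqlt_def lta_def by blast
        next
          case False
          hence lc: "l < c" using 2 by simp
          obtain m where m: "m\<in>downcls K R c y" "\<forall>w\<in>downcls K R c y. R c m w \<and> m \<le> w"
            using AX3[OF c(1), of "{}" y] by auto
          have "m \<le> y" using m(2) ABrefl dc by blast
          have cym: "AB c y m" using m(1) dc by blast
          have mdc: "m \<in> downcls K R l v" using ABtrans[OF yv ABmono[OF cym less_imp_le[OF lc]]] dc by blast
          have mub: "\<forall>u\<in>T X l. R l u m"
            using y(2) Rtrans[OF l(1)] ER1[OF ABE[OF cym l(1) lc]] by blast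
          have "y \<le> m" using y(3) mdc mub by blast
          hence "m = y" using \<open>m \<le> y\<close> by simp
          moreover have "z \<in> downcls K R c y" using c(3) dc by blast
          ultimately have "R c y z" using m(2) by blast
          thus ?thesis using c unfolding sqle_def sqlt_def lta_def by blast
        qed
      qed
    qed
  qed
qed

end

theorem mainTheorem1:
  fixes K :: "'k::wellorder set" and R :: "'k \<Rightarrow> 'a::complete_lattice \<Rightarrow> 'a \<Rightarrow> bool"
  assumes "model_axioms K R"
  shows "(\<forall>x. sqle K R x x) \<and>
         (\<forall>x y. sqle K R x y \<longrightarrow> sqle K R y x \<longrightarrow> x = y) \<and>
         (\<forall>x y z. sqle K R x y \<longrightarrow> sqle K R y z \<longrightarrow> sqle K R x z) \<and>
         (\<forall>x. sqle K R bot x) \<and>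
         (\<forall>X::'a set. X \<noteq> {} \<longrightarrow>
            (\<exists>y. (\<forall>x\<in>X. sqle K R x y) \<and>
                 (\<forall>z. (\<forall>x\<in>X. sqle K R x z) \<longrightarrow> sqle K R y z)))"
proof -
  interpret mdl K R by unfold_locales (rule assms)
  show ?thesis using po_antisym po_trans bot_least lub unfolding sqle_def by blast
qed

end
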